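(* There exist finite languages $L_1, L_2, L_3, L_4$ (over finite alphabets) such that $\mathbb{ROGI}^*(L_1, L_2)$ and $\mathbb{LOGI}^*(L_3, L_4)$ are not regular. (For instance, over $\{\$, a, b, c, d\}$ with $L_1 = \{acdb, cabd\}$, $L_2 = \{a\$b\}$: $\mathbb{ROGI}^*(L_1,L_2) = \{(ca)^i \$ (bd)^i \mid i \geq 0\} \cup \{a (ca)^i \$ (bd)^i b \mid i \geq 0\}$.)
   Context: Outfix-guided insertion: $x \leftarrow y = \{ x_1 u z v x_2 \mid x = x_1 u v x_2,\ y = u z v,\ u \neq \varepsilon,\ v \neq \varepsilon \}$, extended to languages by union over all pairs. Right one-sided iteration: $\mathbb{ROGI}^{(0)}(L_1,L_2) = L_2$, $\mathbb{ROGI}^{(i+1)}(L_1,L_2) = L_1 \leftarrow \mathbb{ROGI}^{(i)}(L_1,L_2)$, $\mathbb{ROGI}^*(L_1,L_2) = \bigcup_{i\geq 0}\mathbb{ROGI}^{(i)}(L_1,L_2)$. Left one-sided iteration: $\mathbb{LOGI}^{(0)}(L_1,L_2) = L_1$, $\mathbb{LOGI}^{(i+1)}(L_1,L_2) = \mathbb{LOGI}^{(i)}(L_1,L_2) \leftarrow L_2$, $\mathbb{LOGI}^*(L_1,L_2) = \bigcup_{i\geq 0}\mathbb{LOGI}^{(i)}(L_1,L_2)$. *)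

theory Defs
  imports Main
begin

definition ogi_word :: "'a list \<Rightarrow> 'a list \<Rightarrow> 'a list set" where
  "ogi_word x y = {x1 @ u @ z @ v @ x2 | x1 u z v x2.
      x = x1 @ u @ v @ x2 \<and> y = u @ z @ v \<and> u \<noteq> [] \<and> v \<noteq> []}"

definition ogi :: "'a list set \<Rightarrow> 'a list set \<Rightarrow> 'a list set" where
  "ogi L1 L2 = (\<Union>x\<in>L1. \<Union>y\<in>L2. ogi_word x y)"

primrec ROGI_pow :: "nat \<Rightarrow> 'a list set \<Rightarrow> 'a list set \<Rightarrow> 'a list set" where
  "ROGI_pow 0 L1 L2 = L2"
| "ROGI_pow (Suc i) L1 L2 = ogi L1 (ROGI_pow i L1 L2)"

definition ROGI_star :: "'a list set \<Rightarrow> 'a list set \<Rightarrow> 'a list set" where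
  "ROGI_star L1 L2 = (\<Union>i. ROGI_pow i L1 L2)"

primrec LOGI_pow :: "nat \<Rightarrow> 'a list set \<Rightarrow> 'a list set \<Rightarrow> 'a list set" where
  "LOGI_pow 0 L1 L2 = L1"
| "LOGI_pow (Suc i) L1 L2 = ogi (LOGI_pow i L1 L2) L2"

definition LOGI_star :: "'a list set \<Rightarrow> 'a list set \<Rightarrow> 'a list set" where
  "LOGI_star L1 L2 = (\<Union>i. LOGI_pow i L1 L2)"

inductive regular :: "'a list set \<Rightarrow> bool" where
  reg_empty: "regular {}"
| reg_eps: "regular {[]}"
| reg_letter: "regular {[c]}"
| reg_union: "regular A \<Longrightarrow> regular B \<Longrightarrow> regular (A \<union> B)"
| reg_conc: "regular A \<Longrightarrow> regular B \<Longrightarrow> regular {u @ v | u v. u \<in> A \<and> v \<in> B}"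
| reg_star: "regular A \<Longrightarrow> regular {concat ws | ws. set ws \<subseteq> A}"

end

theory Submission
  imports Defs
begin


definition Deriv :: "'a list \<Rightarrow> 'a list set \<Rightarrow> 'a list set" where
  "Deriv w L = {t. w @ t \<in> L}"

lemma Deriv_letter: "Deriv w {[c]} \<in> {{[c]},{[]},{}}"
proof (cases w)
  case Nil then show ?thesis by (simp add: Deriv_def)
next
  case (Cons a w')
  show ?thesis
  proof (cases "a = c \<and> w' = []")
    case True then show ?thesis using Cons by (auto simp: Deriv_def)
  next
    case False
    then have "Deriv w {[c]} = {}" using Cons by (auto simp: Deriv_def)
    then show ?thesis by simp
  qed
qed

lemma Deriv_conc: "Deriv w {u@v | u v. u\<in>A \<and> v\<in>B} =
   {s@v | s v. s \<in> Deriv w A \<and> v \<in> B} \<union> \<Union> {Deriv s B | s. \<exists>u. w = u@s \<and> u\<in>A}"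
  (is "?L = ?R")
proof
  show "?L \<subseteq> ?R"
  proof
    fix t assume "t \<in> ?L"
    then obtain u v where uv: "w @ t = u @ v" "u \<in> A" "v \<in> B" by (auto simp: Deriv_def)
    from uv(1) obtain us where "w = u @ us \<and> us @ t = v \<or> w @ us = u \<and> t = us @ v"
      by (auto simp: append_eq_append_conv2)
    then show "t \<in> ?R"
    proof
      assume h: "w = u @ us \<and> us @ t = v"
      then have "t \<in> Deriv us B" using uv by (auto simp: Deriv_def)
      then show ?thesis using h uv by blast
    next
      assume h: "w @ us = u \<and> t = us @ v"
      then have "us \<in> Deriv w A" using uv by (auto simp: Deriv_def)
      then show ?thesis using h uv by blast
    qed
  qed
next
  show "?R \<subseteq> ?L"
    by (auto simp: Deriv_def) (metis append.assoc)+
qed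

lemma Deriv_star_aux:
  assumes "w @ t = concat ws" "set ws \<subseteq> A"
  shows "(w \<in> {concat ws | ws. set ws \<subseteq> A} \<and> t \<in> {concat ws | ws. set ws \<subseteq> A}) \<or>
         (\<exists>u s t1 t2. w = u @ s \<and> u \<in> {concat ws | ws. set ws \<subseteq> A} \<and> t = t1 @ t2 \<and> s @ t1 \<in> A
            \<and> t2 \<in> {concat ws | ws. set ws \<subseteq> A})"
  using assms
proof (induction ws arbitrary: w t)
  case Nil
  then have "w = []" "t = []" by auto
  moreover have "([]::'a list) = concat []" "set [] \<subseteq> A" by auto
  ultimately show ?case by blast
next
  case (Cons a ws)
  let ?S = "{concat ws | ws. set ws \<subseteq> A}"
  from Cons.prems(1) obtain us where "w = a @ us \<and> us @ t = concat ws \<or> w @ us = a \<and> t = us @ concat ws"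
    by (auto simp: append_eq_append_conv2)
  then show ?case
  proof
    assume h: "w = a @ us \<and> us @ t = concat ws"
    have aA: "a \<in> A" using Cons.prems by auto
    have "us @ t = concat ws" "set ws \<subseteq> A" using h Cons.prems(2) by auto
    note IH = Cons.IH[OF this]
    from IH consider "us \<in> ?S \<and> t \<in> ?S" | "(\<exists>u s t1 t2. us = u @ s \<and> u \<in> ?S \<and> t = t1 @ t2 \<and> s @ t1 \<in> A
            \<and> t2 \<in> ?S)" by blast
    then show ?thesis
    proof cases
      case 1
      then obtain vs where "us = concat vs" "set vs \<subseteq> A" by auto
      then have "w = concat (a # vs)" "set (a#vs) \<subseteq> A" using h aA by auto
      then show ?thesis using 1 by blast
    next
      case 2
      then obtain u s t1 t2 where *: "us = u @ s" "u \<in> ?S" "t = t1 @ t2" "s @ t1 \<in> A" "t2 \<in> ?S" by blast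
      then obtain vs where "u = concat vs" "set vs \<subseteq> A" by auto
      then have "a @ u = concat (a # vs)" "set (a#vs) \<subseteq> A" using aA by auto
      then have "a @ u \<in> ?S" by blast
      moreover have "w = (a @ u) @ s" using h * by simp
      ultimately show ?thesis using * by blast
    qed
  next
    assume h: "w @ us = a \<and> t = us @ concat ws"
    have aA: "a \<in> A" using Cons.prems by auto
    have cs: "concat ws \<in> ?S" using Cons.prems by auto
    have "[] \<in> ?S" by (metis (mono_tags, lifting) concat.simps(1) empty_iff empty_set mem_Collect_eq subsetI)
    moreover have "w = [] @ w" "t = us @ concat ws" "w @ us \<in> A" using h aA by auto
    ultimately show ?thesis using cs by blast
  qed
qed

lemma Deriv_star: "Deriv w {concat ws | ws. set ws \<subseteq> A} =
   (if w \<in> {concat ws | ws. set ws \<subseteq> A} then {concat ws | ws. set ws \<subseteq> A} else {}) \<union>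
   \<Union> {{s'@v | s' v. s' \<in> Deriv s A \<and> v \<in> {concat ws | ws. set ws \<subseteq> A}} | s. \<exists>u. w = u@s \<and> u \<in> {concat ws | ws. set ws \<subseteq> A}}"
  (is "?L = ?R")
proof
  let ?S = "{concat ws | ws. set ws \<subseteq> A}"
  show "?L \<subseteq> ?R"
  proof
    fix t assume "t \<in> ?L"
    then obtain ws where ws: "w @ t = concat ws" "set ws \<subseteq> A" by (auto simp: Deriv_def)
    from Deriv_star_aux[OF ws] show "t \<in> ?R"
    proof
      assume "w \<in> ?S \<and> t \<in> ?S" then show ?thesis by simp
    next
      assume "\<exists>u s t1 t2. w = u @ s \<and> u \<in> ?S \<and> t = t1 @ t2 \<and> s @ t1 \<in> A \<and> t2 \<in> ?S"
      then obtain u s t1 t2 where *: "w = u @ s" "u \<in> ?S" "t = t1 @ t2" "s @ t1 \<in> A" "t2 \<in> ?S" by blast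
      then have "t \<in> {s'@v | s' v. s' \<in> Deriv s A \<and> v \<in> ?S}" by (auto simp: Deriv_def)
      then show ?thesis using * by blast
    qed
  qed
next
  let ?S = "{concat ws | ws. set ws \<subseteq> A}"
  have cat: "x \<in> ?S \<Longrightarrow> y \<in> ?S \<Longrightarrow> x @ y \<in> ?S" for x y
  proof -
    assume "x \<in> ?S" "y \<in> ?S"
    then obtain xs ys where "x = concat xs" "set xs \<subseteq> A" "y = concat ys" "set ys \<subseteq> A" by auto
    then have "x @ y = concat (xs @ ys)" "set (xs @ ys) \<subseteq> A" by auto
    then show ?thesis by blast
  qed
  have sing: "x \<in> A \<Longrightarrow> x \<in> ?S" for x
  proof -
    assume "x \<in> A" then have "x = concat [x]" "set [x] \<subseteq> A" by auto
    then show ?thesis by blast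
  qed
  show "?R \<subseteq> ?L"
  proof
    fix t assume "t \<in> ?R"
    then have "t \<in> (if w \<in> ?S then ?S else {}) \<or> t \<in> \<Union> {{s'@v | s' v. s' \<in> Deriv s A \<and> v \<in> ?S} | s. \<exists>u. w = u@s \<and> u \<in> ?S}"
      by blast
    then show "t \<in> ?L"
    proof
      assume h: "t \<in> (if w \<in> ?S then ?S else {})"
      show ?thesis
      proof (cases "w \<in> ?S")
        case True
        then have "t \<in> ?S" using h by (simp only: if_P[OF True] if_True)
        then have "w @ t \<in> ?S" using True by (intro cat)
        then show ?thesis by (simp only: Deriv_def mem_Collect_eq)
      next
        case False
        then show ?thesis using h by (simp only: if_not_P[OF False] if_False empty_iff)
      qed
    next
      assume "t \<in> \<Union> {{s'@v | s' v. s' \<in> Deriv s A \<and> v \<in> ?S} | s. \<exists>u. w = u@s \<and> u \<in> ?S}"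
      then obtain s u s' v where "w = u@s" "u \<in> ?S" "s' \<in> Deriv s A" "v \<in> ?S" "t = s'@v" by blast
      note ** = this
      have "s@s' \<in> A" using **(3) by (simp add: Deriv_def)
      note * = **(1,2) this **(4,5)
      have e1: "s@s' \<in> ?S" using *(3) by (rule sing)
      have e2: "(s@s')@v \<in> ?S" using e1 *(4) by (rule cat)
      have e3: "u@((s@s')@v) \<in> ?S" using *(2) e2 by (rule cat)
      have "w @ t = u@((s@s')@v)" using *(1,5) by simp
      then have "w @ t \<in> ?S" using e3 by (simp only:)
      then show ?thesis by (simp only: Deriv_def mem_Collect_eq)
    qed
  qed
qed



lemma Union_compr_lemma: "(\<And>s. F s = G (H s)) \<Longrightarrow> \<Union> {F s | s. P s} = \<Union> (G ` {H s | s. P s})"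
  by blast

lemma regular_finite_derivs: "regular L \<Longrightarrow> finite (range (\<lambda>w. Deriv w L))"
proof (induction rule: regular.induct)
  case reg_empty
  have "range (\<lambda>w. Deriv w ({}::'a list set)) \<subseteq> {{}}" by (auto simp: Deriv_def)
  then show ?case by (rule finite_subset) simp
next
  case reg_eps
  have D1: "Deriv w ({[]}::'a list set) \<in> {{[]},{}}" for w
  proof (cases "w = []")
    case True then have "Deriv w ({[]}::'a list set) = {[]}" by (auto simp: Deriv_def)
    then show ?thesis by simp
  next
    case False then have "Deriv w ({[]}::'a list set) = {}" by (auto simp: Deriv_def)
    then show ?thesis by simp
  qed
  have "range (\<lambda>w. Deriv w ({[]}::'a list set)) \<subseteq> {{[]},{}}" by (intro image_subsetI D1)
  then show ?case by (rule finite_subset) simp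
next
  case (reg_letter c)
  have "range (\<lambda>w. Deriv w {[c]}) \<subseteq> {{[c]},{[]},{}}" by (intro image_subsetI Deriv_letter)
  then show ?case by (rule finite_subset) simp
next
  case (reg_union A B)
  have "range (\<lambda>w. Deriv w (A \<union> B)) \<subseteq> (\<lambda>(X,Y). X \<union> Y) ` (range (\<lambda>w. Deriv w A) \<times> range (\<lambda>w. Deriv w B))"
  proof
    fix D assume "D \<in> range (\<lambda>w. Deriv w (A \<union> B))"
    then obtain w where "D = Deriv w (A \<union> B)" by blast
    then have "D = (\<lambda>(X,Y). X \<union> Y) (Deriv w A, Deriv w B)" by (auto simp: Deriv_def)
    moreover have "(Deriv w A, Deriv w B) \<in> range (\<lambda>w. Deriv w A) \<times> range (\<lambda>w. Deriv w B)" by blast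
    ultimately show "D \<in> (\<lambda>(X,Y). X \<union> Y) ` (range (\<lambda>w. Deriv w A) \<times> range (\<lambda>w. Deriv w B))" by blast
  qed
  then show ?case by (rule finite_subset) (use reg_union in auto)
next
  case (reg_conc A B)
  have "range (\<lambda>w. Deriv w {u@v | u v. u\<in>A \<and> v\<in>B}) \<subseteq>
    (\<lambda>(X,T). {s@v | s v. s \<in> X \<and> v \<in> B} \<union> \<Union>T) ` (range (\<lambda>w. Deriv w A) \<times> Pow (range (\<lambda>w. Deriv w B)))"
  proof
    fix D assume "D \<in> range (\<lambda>w. Deriv w {u@v | u v. u\<in>A \<and> v\<in>B})"
    then obtain w where "D = Deriv w {u@v | u v. u\<in>A \<and> v\<in>B}" by auto
    then have "D = (\<lambda>(X,T). {s@v | s v. s \<in> X \<and> v \<in> B} \<union> \<Union>T) (Deriv w A, {Deriv s B | s. \<exists>u. w = u@s \<and> u\<in>A})"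
      using Deriv_conc by simp
    moreover have "(Deriv w A, {Deriv s B | s. \<exists>u. w = u@s \<and> u\<in>A}) \<in> range (\<lambda>w. Deriv w A) \<times> Pow (range (\<lambda>w. Deriv w B))"
      by auto
    ultimately show "D \<in> (\<lambda>(X,T). {s@v | s v. s \<in> X \<and> v \<in> B} \<union> \<Union>T) ` (range (\<lambda>w. Deriv w A) \<times> Pow (range (\<lambda>w. Deriv w B)))"
      by blast
  qed
  then show ?case by (rule finite_subset) (use reg_conc in auto)
next
  case (reg_star A)
  let ?S = "{concat ws | ws. set ws \<subseteq> A}"
  let ?G = "\<lambda>(b::bool, T). (if b then ?S else {}) \<union> \<Union> ((\<lambda>X. {s'@v | s' v. s' \<in> X \<and> v \<in> ?S}) ` T)"
  have "range (\<lambda>w. Deriv w ?S) \<subseteq> ?G ` (UNIV \<times> Pow (range (\<lambda>w. Deriv w A)))"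
  proof
    fix D assume "D \<in> range (\<lambda>w. Deriv w ?S)"
    then obtain w where "D = Deriv w ?S" by auto
    have U: "\<Union> {{s'@v | s' v. s' \<in> Deriv s A \<and> v \<in> ?S} | s. \<exists>u. w = u@s \<and> u \<in> ?S} =
       \<Union> ((\<lambda>X. {s'@v | s' v. s' \<in> X \<and> v \<in> ?S}) ` {Deriv s A | s. \<exists>u. w = u@s \<and> u \<in> ?S})"
      by (rule Union_compr_lemma) (rule refl)
    have "D = Deriv w ?S" by fact
    also have "\<dots> = (if w \<in> ?S then ?S else {}) \<union>
       \<Union> {{s'@v | s' v. s' \<in> Deriv s A \<and> v \<in> ?S} | s. \<exists>u. w = u@s \<and> u \<in> ?S}"
      by (rule Deriv_star)
    also have "\<dots> = (if w \<in> ?S then ?S else {}) \<union>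
       \<Union> ((\<lambda>X. {s'@v | s' v. s' \<in> X \<and> v \<in> ?S}) ` {Deriv s A | s. \<exists>u. w = u@s \<and> u \<in> ?S})"
      by (simp only: U)
    also have "\<dots> = ?G (w \<in> ?S, {Deriv s A | s. \<exists>u. w = u@s \<and> u \<in> ?S})"
      by (simp only: prod.case)
    finally have "D = ?G (w \<in> ?S, {Deriv s A | s. \<exists>u. w = u@s \<and> u \<in> ?S})" .
    moreover have "(w \<in> ?S, {Deriv s A | s. \<exists>u. w = u@s \<and> u \<in> ?S}) \<in> UNIV \<times> Pow (range (\<lambda>w. Deriv w A))"
      by auto
    ultimately show "D \<in> ?G ` (UNIV \<times> Pow (range (\<lambda>w. Deriv w A)))" by blast
  qed
  then show ?case by (rule finite_subset) (use reg_star in auto)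
qed



lemma nonreg:
  fixes p t :: "nat \<Rightarrow> 'a list"
  assumes "\<And>n. p n @ t n \<in> L" "\<And>m n. p m @ t n \<in> L \<Longrightarrow> m = n"
  shows "\<not> regular L"
proof
  assume "regular L"
  then have fin: "finite (range (\<lambda>w. Deriv w L))" by (rule regular_finite_derivs)
  let ?f = "\<lambda>n::nat. Deriv (p n) L"
  have "inj ?f"
  proof (rule injI)
    fix m n assume "?f m = ?f n"
    moreover have "t n \<in> ?f n" using assms(1) by (simp add: Deriv_def)
    ultimately have "t n \<in> ?f m" by simp
    then have "p m @ t n \<in> L" by (simp add: Deriv_def)
    then show "m = n" by (rule assms(2))
  qed
  have "range ?f \<subseteq> range (\<lambda>w. Deriv w L)"
    by (intro image_subsetI) (rule image_eqI[OF refl UNIV_I])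
  then have "finite (range ?f)" using fin by (rule finite_subset)
  then have "finite (UNIV::nat set)" using \<open>inj ?f\<close> by (rule finite_imageD)
  then show False by simp
qed

lemma ogi_word_intro: "u \<noteq> [] \<Longrightarrow> v \<noteq> [] \<Longrightarrow> x1@u@z@v@x2 \<in> ogi_word (x1@u@v@x2) (u@z@v)"
  unfolding ogi_word_def mem_Collect_eq
  by (rule exI[of _ x1], rule exI[of _ u], rule exI[of _ z], rule exI[of _ v], rule exI[of _ x2]) simp
lemma ogi_intro: "u \<noteq> [] \<Longrightarrow> v \<noteq> [] \<Longrightarrow> x1@u@v@x2 \<in> A \<Longrightarrow> u@z@v \<in> B \<Longrightarrow> x1@u@z@v@x2 \<in> ogi A B"
  unfolding ogi_def by (rule UN_I, assumption, rule UN_I, assumption, rule ogi_word_intro)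

lemma split_gen: "x = x1@u@v@x2 \<Longrightarrow> u\<noteq>[] \<Longrightarrow> v\<noteq>[] \<Longrightarrow>
  \<exists>i j. i+2 \<le> j \<and> j \<le> length x \<and> x1 = take i x \<and> hd u = x!i \<and> last v = x!(j-1) \<and> x2 = drop j x"
proof -
  assume h: "x = x1@u@v@x2" "u\<noteq>[]" "v\<noteq>[]"
  have "length u \<ge> 1" "length v \<ge> 1" using h by (auto simp: Suc_le_eq)
  moreover have "x1 = take (length x1) x" using h by simp
  moreover have "hd u = x ! (length x1)" using h by (simp add: nth_append hd_conv_nth)
  moreover have "last v = x ! (length x1 + length u + length v - 1)"
  proof -
    have e: "length x1 + length u + length v - 1 = length (x1@u) + (length v - 1)"
      using \<open>length v \<ge> 1\<close> by simp
    have "x = (x1@u) @ (v@x2)" using h by simp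
    then have "x ! (length (x1@u) + (length v - 1)) = (v@x2) ! (length v - 1)"
      by (simp only: nth_append_length_plus)
    also have "\<dots> = v ! (length v - 1)"
    proof -
      have "length v - 1 < length v" using \<open>length v \<ge> 1\<close> by simp
      then show ?thesis by (simp only: nth_append if_True)
    qed
    also have "\<dots> = last v" using h(3) by (simp add: last_conv_nth)
    finally show ?thesis using e by simp
  qed
  moreover have "x2 = drop (length x1 + length u + length v) x" using h by simp
  moreover have "length x1 + length u + length v \<le> length x" using h by simp
  ultimately show ?thesis
    by (intro exI[of _ "length x1"] exI[of _ "length x1 + length u + length v"]) auto
qed

lemma split_gen_y: "y = u@z@v \<Longrightarrow> u\<noteq>[] \<Longrightarrow> v\<noteq>[] \<Longrightarrow>
  \<exists>i j. 1 \<le> i \<and> i \<le> j \<and> j < length y \<and> u = take i y \<and> z = drop i (take j y) \<and> v = drop j y"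
proof -
  assume h: "y = u@z@v" "u\<noteq>[]" "v\<noteq>[]"
  show ?thesis
    by (rule exI[of _ "length u"], rule exI[of _ "length u + length z"]) (use h in \<open>auto simp: Suc_le_eq\<close>)
qed

lemma split4: "[p,q,r,s] = x1@u@v@x2 \<Longrightarrow> u\<noteq>[] \<Longrightarrow> v\<noteq>[] \<Longrightarrow>
   (x1=[] \<and> hd u = p \<and> last v = q \<and> x2=[r,s]) \<or> (x1=[] \<and> hd u = p \<and> last v = r \<and> x2=[s]) \<or>
   (x1=[] \<and> hd u=p \<and> last v = s \<and> x2=[]) \<or> (x1=[p] \<and> hd u = q \<and> last v = r \<and> x2=[s]) \<or>
   (x1=[p] \<and> hd u = q \<and> last v = s \<and> x2 = []) \<or> (x1=[p,q] \<and> hd u = r \<and> last v = s \<and> x2=[])"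
proof -
  assume h: "[p,q,r,s] = x1@u@v@x2" "u\<noteq>[]" "v\<noteq>[]"
  from split_gen[OF h] obtain i j where ij: "i+2 \<le> j" "j \<le> 4" "x1 = take i [p,q,r,s]"
    "hd u = [p,q,r,s]!i" "last v = [p,q,r,s]!(j-1)" "x2 = drop j [p,q,r,s]" by auto
  have "(i = 0 \<and> j = 2) \<or> (i = 0 \<and> j = 3) \<or> (i = 0 \<and> j = 4) \<or> (i = 1 \<and> j = 3) \<or> (i = 1 \<and> j = 4) \<or> (i = 2 \<and> j = 4)"
    using ij(1,2) by presburger
  then show ?thesis using ij(3-6) by (elim disjE) (simp_all add: numeral_eq_Suc)
qed

lemma split4y: "[p,q,r,s] = u@z@v \<Longrightarrow> u\<noteq>[] \<Longrightarrow> v\<noteq>[] \<Longrightarrow>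
   z = [] \<or> (u=[p] \<and> z=[q,r] \<and> v=[s]) \<or> (u=[p] \<and> z=[q] \<and> v=[r,s]) \<or> (u=[p,q] \<and> z=[r] \<and> v=[s])"
proof -
  assume h: "[p,q,r,s] = u@z@v" "u\<noteq>[]" "v\<noteq>[]"
  from split_gen_y[OF h] obtain i j where ij: "1 \<le> i" "i \<le> j" "j < 4" "u = take i [p,q,r,s]"
    "z = drop i (take j [p,q,r,s])" "v = drop j [p,q,r,s]" by auto
  have "(i = 1 \<and> j = 1) \<or> (i = 1 \<and> j = 2) \<or> (i = 1 \<and> j = 3) \<or> (i = 2 \<and> j = 2) \<or> (i = 2 \<and> j = 3) \<or> (i = 3 \<and> j = 3)"
    using ij(1-3) by presburger
  then show ?thesis using ij(4-6) by (elim disjE) (simp_all add: numeral_eq_Suc)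
qed

lemma concat_rep_Suc': "concat (replicate (Suc n) xs) = concat (replicate n xs) @ xs"
  by (induction n) auto

lemma count_concat_rep: "count_list (concat (replicate n xs)) k = n * count_list xs k"
  by (induction n) auto



definition PR :: "nat list \<Rightarrow> bool" where
  "PR w = (w \<noteq> [] \<and> (hd w, last w) \<in> {(0,1),(2,3)} \<and>
     count_list w 0 + count_list w 2 = count_list w 1 + count_list w 3)"

lemma PR_step:
  assumes "PR y" "x \<in> {[0,2,3,1],[2,0,1,3]}" "r \<in> ogi_word x y"
  shows "PR r"
proof -
  obtain x1 u z v x2 where h: "r = x1 @ u @ z @ v @ x2" "x = x1 @ u @ v @ x2" "y = u @ z @ v" "u \<noteq> []" "v \<noteq> []"
    using assms(3) unfolding ogi_word_def mem_Collect_eq by (elim exE conjE) (rule that; assumption)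
  have r: "r = x1 @ y @ x2" using h by simp
  have hy: "hd y = hd u" "last y = last v" "y \<noteq> []" using h by auto
  from assms(2) consider "x = [0,2,3,1]" | "x = [2,0,1,3]" by blast
  then show ?thesis
  proof cases
    case 1
    then have "[0,2,3,1] = x1@u@v@x2" using h by simp
    from split4[OF this h(4) h(5)] show ?thesis using assms(1) hy r unfolding PR_def
      by (auto simp: hd_append last_append)
  next
    case 2
    then have "[2,0,1,3] = x1@u@v@x2" using h by simp
    from split4[OF this h(4) h(5)] show ?thesis using assms(1) hy r unfolding PR_def
      by (auto simp: hd_append last_append)
  qed
qed

lemma PR_pow: "w \<in> ROGI_pow i {[0,2,3,1],[2,0,1,3]} {[0,4,1]} \<Longrightarrow> PR w"
proof (induction i arbitrary: w)
  case 0 then show ?case by (simp add: PR_def)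
next
  case (Suc i)
  from Suc.prems obtain x y where xy: "x \<in> {[0,2,3,1],[2,0,1,3]}" "y \<in> ROGI_pow i {[0,2,3,1],[2,0,1,3]} {[0,4,1]}" "w \<in> ogi_word x y"
    unfolding ROGI_pow.simps ogi_def by (elim UN_E) (rule that; assumption)
  show ?case by (rule PR_step[OF Suc.IH[OF xy(2)] xy(1) xy(3)])
qed



definition preR :: "nat \<Rightarrow> nat list" where "preR n = concat (replicate n [2,0])"
definition sufR :: "nat \<Rightarrow> nat list" where "sufR n = concat (replicate n [1,3])"

lemma preR_Suc: "preR (Suc n) = [2,0] @ preR n" by (simp add: preR_def)
lemma sufR_Suc: "sufR (Suc n) = sufR n @ [1,3]" by (simp only: sufR_def concat_rep_Suc')

lemma ROGI_lower: "[0] @ preR n @ [4] @ sufR n @ [1] \<in> ROGI_pow (2*n) {[0,2,3,1],[2,0,1,3]} {[0,4,1]}"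
proof (induction n)
  case 0 then show ?case by (simp add: preR_def sufR_def)
next
  case (Suc n)
  let ?L1 = "{[0,2,3,1],[2,0,1,3]::nat list}" and ?L2 = "{[0,4,1]::nat list}"
  have "[2] @ [0] @ (preR n @ [4] @ sufR n) @ [1] @ [3] \<in> ogi ?L1 (ROGI_pow (2*n) ?L1 ?L2)"
    by (rule ogi_intro) (use Suc in auto)
  then have A: "[2,0] @ preR n @ [4] @ sufR n @ [1,3] \<in> ROGI_pow (Suc (2*n)) ?L1 ?L2" by simp
  have "[0] @ [2] @ ([0] @ preR n @ [4] @ sufR n @ [1]) @ [3] @ [1] \<in> ogi ?L1 (ROGI_pow (Suc (2*n)) ?L1 ?L2)"
    by (rule ogi_intro) (use A in auto)
  then show ?case by (simp add: preR_Suc sufR_Suc)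
qed

lemma ROGI_nonreg: "\<not> regular (ROGI_star {[0,2,3,1],[2,0,1,3]} {[0,4,1::nat]})"
proof (rule nonreg[where p = "\<lambda>n. [0] @ preR n @ [4]" and t = "\<lambda>n. sufR n @ [1]"])
  fix n show "([0] @ preR n @ [4]) @ sufR n @ [1] \<in> ROGI_star {[0,2,3,1],[2,0,1,3]} {[0,4,1]}"
    using ROGI_lower[of n] unfolding ROGI_star_def by auto
next
  fix m n assume "([0] @ preR m @ [4]) @ sufR n @ [1] \<in> ROGI_star {[0,2,3,1],[2,0,1,3]} {[0,4,1]}"
  then have "PR (([0] @ preR m @ [4]) @ sufR n @ [1])" using PR_pow unfolding ROGI_star_def by blast
  then show "m = n" unfolding PR_def by (simp add: preR_def sufR_def count_concat_rep)
qed



definition adj :: "nat \<Rightarrow> nat \<Rightarrow> bool" where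
  "adj a b = ((a,b) \<in> {(0,2),(2,0),(0,1),(2,3),(3,1),(1,3)})"

fun ok :: "nat list \<Rightarrow> bool" where
  "ok (a#b#w) = (adj a b \<and> ok (b#w))"
| "ok _ = True"

lemma ok_Cons: "ok (a # w) = (ok w \<and> (w \<noteq> [] \<longrightarrow> adj a (hd w)))"
  by (cases w) auto

lemma ok_append: "ok (xs@ys) = (ok xs \<and> ok ys \<and> (xs \<noteq> [] \<longrightarrow> ys \<noteq> [] \<longrightarrow> adj (last xs) (hd ys)))"
proof (induction xs)
  case Nil then show ?case by simp
next
  case (Cons a xs)
  show ?case
  proof (cases xs)
    case Nil then show ?thesis by (simp add: ok_Cons)
  next
    case (Cons b xs')
    then show ?thesis using Cons.IH by (simp only: ok_Cons) auto
  qed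
qed

lemma ok_infix: "ok (xs @ m @ ys) \<Longrightarrow> ok m"
  by (simp add: ok_append)

lemma ok_mid: "ok (xs @ m @ ys) \<Longrightarrow> m \<noteq> [] \<Longrightarrow> m' \<noteq> [] \<Longrightarrow> hd m = hd m' \<Longrightarrow> last m = last m' \<Longrightarrow> ok m'
  \<Longrightarrow> ok (xs @ m' @ ys)"
  by (simp add: ok_append hd_append last_append)


definition PL :: "nat list \<Rightarrow> bool" where
  "PL w = (ok w \<and> count_list w 2 = count_list w 3)"

lemma PL_step:
  assumes "PL x" "y \<in> {[0,2,3,1],[2,0,1,3]}" "r \<in> ogi_word x y"
  shows "PL r"
proof -
  obtain x1 u z v x2 where h: "r = x1 @ u @ z @ v @ x2" "x = x1 @ u @ v @ x2" "y = u @ z @ v" "u \<noteq> []" "v \<noteq> []"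
    using assms(3) unfolding ogi_word_def mem_Collect_eq by (elim exE conjE) (rule that; assumption)
  from assms(2) consider "y = [0,2,3,1]" | "y = [2,0,1,3]" by blast
  then show ?thesis
  proof cases
    case 1
    then have "[0,2,3,1] = u@z@v" using h by simp
    from split4y[OF this h(4) h(5)]
    consider "z = []" | "u=[0] \<and> z=[2,3] \<and> v=[1]" | "u=[0] \<and> z=[2] \<and> v=[3,1]" | "u=[0,2] \<and> z=[3] \<and> v=[1]"
      by blast
    then show ?thesis
    proof cases
      case 1 then have "r = x" using h by simp
      then show ?thesis using assms(1) by simp
    next
      case 2
      then have xr: "x = x1 @ [0,1] @ x2" "r = x1 @ [0,2,3,1] @ x2" using h by auto
      have "ok x" using assms(1) unfolding PL_def by simp
      then have "ok (x1 @ [0,1] @ x2)" using xr by simp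
      then have "ok (x1 @ [0,2,3,1] @ x2)" by (rule ok_mid) (simp_all add: adj_def)
      moreover have "count_list r 2 = count_list r 3" using assms(1) xr unfolding PL_def by simp
      ultimately show ?thesis using xr unfolding PL_def by simp
    next
      case 3
      then have "x = x1 @ [0,3,1] @ x2" using h by auto
      then have "ok [0,3,1]" using assms(1) ok_infix unfolding PL_def by blast
      then show ?thesis by (simp add: adj_def)
    next
      case 4
      then have "x = x1 @ [0,2,1] @ x2" using h by auto
      then have "ok [0,2,1]" using assms(1) ok_infix unfolding PL_def by blast
      then show ?thesis by (simp add: adj_def)
    qed
  next
    case 2
    then have "[2,0,1,3] = u@z@v" using h by simp
    from split4y[OF this h(4) h(5)]
    consider "z = []" | "u=[2] \<and> z=[0,1] \<and> v=[3]" | "u=[2] \<and> z=[0] \<and> v=[1,3]" | "u=[2,0] \<and> z=[1] \<and> v=[3]"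
      by blast
    then show ?thesis
    proof cases
      case 1 then have "r = x" using h by simp
      then show ?thesis using assms(1) by simp
    next
      case 2
      then have xr: "x = x1 @ [2,3] @ x2" "r = x1 @ [2,0,1,3] @ x2" using h by auto
      have "ok x" using assms(1) unfolding PL_def by simp
      then have "ok (x1 @ [2,3] @ x2)" using xr by simp
      then have "ok (x1 @ [2,0,1,3] @ x2)" by (rule ok_mid) (simp_all add: adj_def)
      moreover have "count_list r 2 = count_list r 3" using assms(1) xr unfolding PL_def by simp
      ultimately show ?thesis using xr unfolding PL_def by simp
    next
      case 3
      then have "x = x1 @ [2,1,3] @ x2" using h by auto
      then have "ok [2,1,3]" using assms(1) ok_infix unfolding PL_def by blast
      then show ?thesis by (simp add: adj_def)
    next
      case 4
      then have "x = x1 @ [2,0,3] @ x2" using h by auto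
      then have "ok [2,0,3]" using assms(1) ok_infix unfolding PL_def by blast
      then show ?thesis by (simp add: adj_def)
    qed
  qed
qed

lemma PL_pow: "w \<in> LOGI_pow i {[0,1]} {[0,2,3,1],[2,0,1,3]} \<Longrightarrow> PL w"
proof (induction i arbitrary: w)
  case 0 then show ?case by (simp add: PL_def adj_def)
next
  case (Suc i)
  from Suc.prems obtain x y where xy: "x \<in> LOGI_pow i {[0,1]} {[0,2,3,1],[2,0,1,3]}" "y \<in> {[0,2,3,1],[2,0,1,3]}" "w \<in> ogi_word x y"
    unfolding LOGI_pow.simps ogi_def by (elim UN_E) (rule that; assumption)
  show ?case by (rule PL_step[OF Suc.IH[OF xy(1)] xy(2) xy(3)])
qed



definition preL :: "nat \<Rightarrow> nat list" where "preL n = concat (replicate n [0,2])"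
definition sufL :: "nat \<Rightarrow> nat list" where "sufL n = concat (replicate n [3,1])"

lemma preL_Suc: "preL (Suc n) = preL n @ [0,2]" by (simp only: preL_def concat_rep_Suc')
lemma sufL_Suc: "sufL (Suc n) = [3,1] @ sufL n" by (simp add: sufL_def)

lemma LOGI_lower: "preL n @ [0,1] @ sufL n \<in> LOGI_pow (2*n) {[0,1]} {[0,2,3,1],[2,0,1,3]}"
proof (induction n)
  case 0 then show ?case by (simp add: preL_def sufL_def)
next
  case (Suc n)
  let ?L3 = "{[0,1]::nat list}" and ?L4 = "{[0,2,3,1],[2,0,1,3]::nat list}"
  have "preL n @ [0] @ [2,3] @ [1] @ sufL n \<in> ogi (LOGI_pow (2*n) ?L3 ?L4) ?L4"
    by (rule ogi_intro) (use Suc in auto)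
  then have A: "(preL n @ [0]) @ [2] @ [3] @ ([1] @ sufL n) \<in> LOGI_pow (Suc (2*n)) ?L3 ?L4" by simp
  have "(preL n @ [0]) @ [2] @ [0,1] @ [3] @ ([1] @ sufL n) \<in> ogi (LOGI_pow (Suc (2*n)) ?L3 ?L4) ?L4"
    by (rule ogi_intro) (use A in auto)
  then show ?case by (simp add: preL_Suc sufL_Suc)
qed

lemma LOGI_nonreg: "\<not> regular (LOGI_star {[0,1]} {[0,2,3,1],[2,0,1,3::nat]})"
proof (rule nonreg[where p = "\<lambda>n. preL n" and t = "\<lambda>n. [0,1] @ sufL n"])
  fix n show "preL n @ [0,1] @ sufL n \<in> LOGI_star {[0,1]} {[0,2,3,1],[2,0,1,3]}"
    using LOGI_lower[of n] unfolding LOGI_star_def by auto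
next
  fix m n assume "preL m @ [0,1] @ sufL n \<in> LOGI_star {[0,1]} {[0,2,3,1],[2,0,1,3]}"
  then have "PL (preL m @ [0,1] @ sufL n)" using PL_pow unfolding LOGI_star_def by blast
  then show "m = n" unfolding PL_def by (simp add: preL_def sufL_def count_concat_rep)
qed



theorem proposition4p12:
  shows "\<exists>(\<Sigma>::nat set) (L1::nat list set) L2 L3 L4.
           finite \<Sigma> \<and>
           finite L1 \<and> finite L2 \<and> finite L3 \<and> finite L4 \<and>
           L1 \<subseteq> lists \<Sigma> \<and> L2 \<subseteq> lists \<Sigma> \<and> L3 \<subseteq> lists \<Sigma> \<and> L4 \<subseteq> lists \<Sigma> \<and>
           \<not> regular (ROGI_star L1 L2) \<and> \<not> regular (LOGI_star L3 L4)"
  apply (rule exI[of _ "{0..4}"], rule exI[of _ "{[0,2,3,1],[2,0,1,3]}"], rule exI[of _ "{[0,4,1]}"],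
         rule exI[of _ "{[0,1]}"], rule exI[of _ "{[0,2,3,1],[2,0,1,3]}"])
  using ROGI_nonreg LOGI_nonreg by simp


end
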